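(* For any finite nonsolvable group $G$, there exists a finite non-abelian simple group $H$ with $|\mathrm{Solv}(G)| \geq |\mathrm{Solv}(H)|$.
   Context: For a finite group $G$ and $x \in G$, the solvabilizer of $x$ in $G$ is $\mathrm{Sol}_G(x) = \{y \in G : \langle x, y \rangle \text{ is solvable}\}$. $\mathrm{Solv}(G) = \{\mathrm{Sol}_G(x) : x \in G\}$ is the set of distinct solvabilizers of elements of $G$. *)

theory Defs
  imports "HOL-Algebra.Solvable_Groups" "HOL-Algebra.SimpleGroups" "HOL-Algebra.Generated_Groups"
begin

definition solvabilizer :: "('a, 'b) monoid_scheme \<Rightarrow> 'a \<Rightarrow> 'a set" where
  "solvabilizer G x = {y \<in> carrier G. solvable (G\<lparr>carrier := generate G {x, y}\<rparr>)}"

definition Solv :: "('a, 'b) monoid_scheme \<Rightarrow> 'a set set" where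
  "Solv G = solvabilizer G ` carrier G"

end

theory Submission
  imports Defs
begin

lemma solv_sub_iff:
  assumes "group G" "subgroup A G"
  shows "solvable (G\<lparr>carrier := A\<rparr>) \<longleftrightarrow> solvable_seq G A"
proof -
  have gA: "group (G\<lparr>carrier := A\<rparr>)" using subgroup.subgroup_is_group[OF assms(2,1)] .
  have gh: "group_hom (G\<lparr>carrier := A\<rparr>) G id"
    using gA assms subgroup.subset[OF assms(2)]
    unfolding group_hom_def group_hom_axioms_def hom_def by auto
  show ?thesis
  proof
    assume "solvable (G\<lparr>carrier := A\<rparr>)"
    then have "solvable_seq G (id ` A)"
      using group_hom.solvable_imp_solvable_img[OF gh, of A] unfolding solvable_def by simp
    then show "solvable_seq G A" by simp
  next
    assume "solvable_seq G A"
    then show "solvable (G\<lparr>carrier := A\<rparr>)"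
      using group_hom.solvable_img_imp_solvable[OF gh, of A] group.subgroup_self[OF gA]
      unfolding solvable_def by simp
  qed
qed

lemma hom_solvable_img:
  assumes "group_hom G1 G2 h" "subgroup A G1" "solvable (G1\<lparr>carrier := A\<rparr>)"
  shows "solvable (G2\<lparr>carrier := h ` A\<rparr>)"
proof -
  have "solvable_seq G1 A" using solv_sub_iff[of G1 A] assms group_hom.axioms(1) by blast
  then have "solvable_seq G2 (h ` A)" using group_hom.solvable_imp_solvable_img[OF assms(1)] by blast
  then show ?thesis using solv_sub_iff[of G2 "h ` A"] assms group_hom.axioms(2)
      group_hom.subgroup_img_is_subgroup by blast
qed

lemma hom_solvable_img_inj:
  assumes "group_hom G1 G2 h" "subgroup A G1" "inj_on h A" "solvable (G2\<lparr>carrier := h ` A\<rparr>)"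
  shows "solvable (G1\<lparr>carrier := A\<rparr>)"
proof -
  have "solvable_seq G2 (h ` A)" using solv_sub_iff[of G2 "h ` A"] assms group_hom.axioms(2)
      group_hom.subgroup_img_is_subgroup by blast
  then have "solvable_seq G1 A" using group_hom.solvable_img_imp_solvable[OF assms(1,2,3)] by blast
  then show ?thesis using solv_sub_iff[of G1 A] assms group_hom.axioms(1) by blast
qed

lemma solvable_sub_of_solvable:
  assumes "group G" "subgroup N G" "subgroup J G" "J \<subseteq> N" "solvable (G\<lparr>carrier := N\<rparr>)"
  shows "solvable (G\<lparr>carrier := J\<rparr>)"
proof -
  have gN: "group (G\<lparr>carrier := N\<rparr>)" using subgroup.subgroup_is_group[OF assms(2,1)] .
  have sJ: "subgroup J (G\<lparr>carrier := N\<rparr>)"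
    using assms group.subgroup_incl by (metis group.subgroup_incl)
  have "solvable_seq (G\<lparr>carrier := N\<rparr>) J" using group.solvable_subgroup[OF gN sJ assms(5)] .
  then show ?thesis using solv_sub_iff[OF gN sJ] by simp
qed

lemma comm_solvable: assumes "comm_group G" shows "solvable G"
proof -
  interpret comm_group G by fact
  have "(derived G ^^ 1) (carrier G) = {\<one>\<^bsub>G\<^esub>}" using derived_eq_singleton by simp
  then show ?thesis using solvable_iff_trivial_derived_seq by blast
qed

lemma exists_K:
  assumes "group G" "finite (carrier G)" "\<not> solvable G"
  obtains K where "subgroup K G" "\<not> solvable (G\<lparr>carrier := K\<rparr>)"
    "\<And>J. subgroup J G \<Longrightarrow> J \<subset> K \<Longrightarrow> solvable (G\<lparr>carrier := J\<rparr>)"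
proof -
  let ?P = "\<lambda>J. subgroup J G \<and> \<not> solvable (G\<lparr>carrier := J\<rparr>)"
  have "G\<lparr>carrier := carrier G\<rparr> = G" by simp
  then have "?P (carrier G)" using assms group.subgroup_self by metis
  then obtain K where K: "?P K" "\<And>J. ?P J \<Longrightarrow> card K \<le> card J"
    using ex_has_least_nat[of ?P "carrier G" card] by blast
  have "solvable (G\<lparr>carrier := J\<rparr>)" if "subgroup J G" "J \<subset> K" for J
  proof (rule ccontr)
    assume "\<not> ?thesis"
    then have "card K \<le> card J" using K that by blast
    moreover have "finite K" using K(1) subgroup.subset assms(2) finite_subset by blast
    moreover have "card J < card K" using psubset_card_mono[OF \<open>finite K\<close> that(2)] .
    ultimately show False by linarith
  qed
  then show ?thesis using that K by blast
qed

lemma exists_maxnormal: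
  assumes "group H" "finite (carrier H)" "carrier H \<noteq> {\<one>\<^bsub>H\<^esub>}"
  obtains N where "N \<lhd> H" "N \<noteq> carrier H" "\<And>M. M \<lhd> H \<Longrightarrow> M \<noteq> carrier H \<Longrightarrow> card M \<le> card N"
proof -
  let ?P = "\<lambda>M. M \<lhd> H \<and> M \<noteq> carrier H"
  have "?P {\<one>\<^bsub>H\<^esub>}" using assms group.one_is_normal by metis
  then obtain N where N: "?P N" "\<And>M. ?P M \<Longrightarrow> card (carrier H) - card N \<le> card (carrier H) - card M"
    using ex_has_least_nat[of ?P "{\<one>\<^bsub>H\<^esub>}" "\<lambda>M. card (carrier H) - card M"] by blast
  have "card M \<le> card N" if "M \<lhd> H" "M \<noteq> carrier H" for M
  proof -
    have "card M \<le> card (carrier H)" using that(1) normal_imp_subgroup subgroup.subset assms(2) card_mono by metis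
    then show ?thesis using N(2)[of M] that by linarith
  qed
  then show ?thesis using that N by blast
qed

lemma simple_quot:
  assumes "group H" "finite (carrier H)" "N \<lhd> H" "N \<noteq> carrier H"
    "\<And>M. M \<lhd> H \<Longrightarrow> M \<noteq> carrier H \<Longrightarrow> card M \<le> card N"
  shows "simple_group (H Mod N)"
proof -
  interpret normal N H by fact
  interpret Q: group "H Mod N" by (rule factorgroup_is_group)
  have oneQ: "\<one>\<^bsub>H Mod N\<^esub> = N" by (simp add: FactGroup_def)
  have cQ: "carrier (H Mod N) = rcosets\<^bsub>H\<^esub> N" by (simp add: FactGroup_def)
  have finQ: "finite (carrier (H Mod N))" 
    using assms(2) unfolding cQ RCOSETS_def by simp
  show ?thesis
  proof (unfold_locales)
    have "carrier (H Mod N) \<noteq> {\<one>\<^bsub>H Mod N\<^esub>}" using fact_group_trivial_iff assms by blast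
    moreover have "\<one>\<^bsub>H Mod N\<^esub> \<in> carrier (H Mod N)" using Q.one_closed by simp
    ultimately have "\<exists>a \<in> carrier (H Mod N). a \<noteq> \<one>\<^bsub>H Mod N\<^esub>" by blast
    then have "card {\<one>\<^bsub>H Mod N\<^esub>} < card (carrier (H Mod N))"
      using finQ \<open>\<one>\<^bsub>H Mod N\<^esub> \<in> carrier (H Mod N)\<close>
      by (metis \<open>carrier (H Mod N) \<noteq> {\<one>\<^bsub>H Mod N\<^esub>}\<close> bot.extremum insert_subset psubsetI psubset_card_mono)
    then show "1 < order (H Mod N)" unfolding order_def by simp
  next
    fix X assume X: "X \<lhd> H Mod N"
    have sX: "subgroup X (H Mod N)" using X normal_imp_subgroup by blast
    have Mn: "\<Union>X \<lhd> H" using factgroup_subgroup_union_normal X by blast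
    have fac: "X = rcosets\<^bsub>H\<lparr>carrier := \<Union>X\<rparr>\<^esub> N" using factgroup_subgroup_union_factor sX by blast
    have "N \<in> X" using subgroup.one_closed[OF sX] oneQ by simp
    then have NM: "N \<subseteq> \<Union>X" by blast
    show "X = carrier (H Mod N) \<or> X = {\<one>\<^bsub>H Mod N\<^esub>}"
    proof (cases "\<Union>X = carrier H")
      case True
      then have "X = rcosets\<^bsub>H\<^esub> N" using fac by simp
      then show ?thesis using cQ by simp
    next
      case False
      then have "card (\<Union>X) \<le> card N" using assms(5) Mn by blast
      moreover have "finite (\<Union>X)" using Mn normal_imp_subgroup subgroup.subset assms(2) finite_subset by metis
      ultimately have eq: "\<Union>X = N" using NM card_seteq by blast
      have "X = {N}"
      proof -
        have "rcosets\<^bsub>H\<lparr>carrier := N\<rparr>\<^esub> N = {N}"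
        proof -
          have ne: "N \<noteq> {}" using subgroup.one_closed[OF normal_imp_subgroup[OF assms(3)]] by blast
          have "\<And>a. a \<in> N \<Longrightarrow> r_coset (H\<lparr>carrier := N\<rparr>) N a = N"
            using rcos_const[OF is_group] by (simp add: r_coset_def)
          then show ?thesis unfolding RCOSETS_def using ne by auto
        qed
        then show ?thesis using fac eq by simp
      qed
      then show ?thesis using oneQ by simp
    qed
  qed
qed

lemma key_equiv:
  assumes G: "group G" and K: "subgroup K G" and N: "N \<lhd> G\<lparr>carrier := K\<rparr>"
    and Ns: "solvable (G\<lparr>carrier := N\<rparr>)" and x: "x \<in> K" and y: "y \<in> K"
  defines "GK \<equiv> G\<lparr>carrier := K\<rparr>"
  defines "Q \<equiv> GK Mod N"
  defines "\<pi> \<equiv> (\<lambda>a. r_coset GK N a)"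
  shows "solvable (Q\<lparr>carrier := generate Q {\<pi> x, \<pi> y}\<rparr>) \<longleftrightarrow> solvable (G\<lparr>carrier := generate G {x,y}\<rparr>)"
proof -
  interpret GG: group G by fact
  have gGK: "group GK" unfolding GK_def using subgroup.subgroup_is_group[OF K G] .
  interpret normal N GK using N unfolding GK_def .
  have gQ: "group Q" unfolding Q_def by (rule factorgroup_is_group)
  have hom: "group_hom GK Q \<pi>" unfolding Q_def \<pi>_def
    using r_coset_hom_Mod gGK factorgroup_is_group by (simp add: group_hom_def group_hom_axioms_def)
  interpret h: group_hom GK Q \<pi> by (rule hom)
  define A where "A = generate G {x,y}"
  have xyK: "{x,y} \<subseteq> K" using x y by auto
  have AK: "A \<subseteq> K" unfolding A_def using GG.generate_subgroup_incl[OF xyK K] .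
  have A_GK: "generate GK {x,y} = A" unfolding A_def GK_def using GG.generate_consistent[OF xyK K] .
  have sA_GK: "subgroup A GK" using group.generate_is_subgroup[OF gGK, of "{x,y}"] xyK A_GK
    unfolding GK_def by simp
  have sA: "subgroup A G" unfolding A_def using GG.generate_is_subgroup xyK subgroup.subset[OF K] by blast
  have genQ: "generate Q {\<pi> x, \<pi> y} = \<pi> ` A"
    using h.generate_img[of "{x,y}"] xyK A_GK unfolding GK_def by simp
  have GKA: "GK\<lparr>carrier := A\<rparr> = G\<lparr>carrier := A\<rparr>" unfolding GK_def by simp
  show ?thesis
    unfolding genQ A_def[symmetric]
  proof
    assume sQ: "solvable (Q\<lparr>carrier := \<pi> ` A\<rparr>)"
    have sN: "subgroup N G" using normal_imp_subgroup[OF N] K GG.incl_subgroup by blast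
    have sAN: "subgroup (A \<inter> N) G" using sA sN GG.subgroups_Inter_pair by blast
    have solAN: "solvable (G\<lparr>carrier := A \<inter> N\<rparr>)"
      using solvable_sub_of_solvable[OF G sN sAN _ Ns] by blast
    have gA: "group (G\<lparr>carrier := A\<rparr>)" using subgroup.subgroup_is_group[OF sA G] .
    have gAN: "group (G\<lparr>carrier := A \<inter> N\<rparr>)" using subgroup.subgroup_is_group[OF sAN G] .
    have sQA: "subgroup (\<pi> ` A) Q" using h.subgroup_img_is_subgroup[OF sA_GK] .
    have gQA: "group (Q\<lparr>carrier := \<pi> ` A\<rparr>)" using subgroup.subgroup_is_group[OF sQA gQ] .
    have f1: "group_hom (G\<lparr>carrier := A \<inter> N\<rparr>) (G\<lparr>carrier := A\<rparr>) id"
      using gA gAN unfolding group_hom_def group_hom_axioms_def hom_def by auto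
    have f2: "group_hom (G\<lparr>carrier := A\<rparr>) (Q\<lparr>carrier := \<pi> ` A\<rparr>) \<pi>"
      using gA gQA h.hom_mult AK unfolding group_hom_def group_hom_axioms_def hom_def GK_def
      by (auto simp: subset_iff)
    have ker: "kernel (G\<lparr>carrier := A\<rparr>) (Q\<lparr>carrier := \<pi> ` A\<rparr>) \<pi> \<subseteq> id ` carrier (G\<lparr>carrier := A \<inter> N\<rparr>)"
    proof
      fix a assume a: "a \<in> kernel (G\<lparr>carrier := A\<rparr>) (Q\<lparr>carrier := \<pi> ` A\<rparr>) \<pi>"
      then have aA: "a \<in> A" and pa: "\<pi> a = N" unfolding kernel_def Q_def by (auto simp: FactGroup_def)
      have "\<one>\<^bsub>G\<^esub> \<in> N" using subgroup.one_closed[OF sN] .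
      then have "\<one>\<^bsub>G\<^esub> \<otimes>\<^bsub>G\<^esub> a \<in> \<pi> a" unfolding \<pi>_def GK_def r_coset_def by auto
      then have "a \<in> N" using pa aA AK subgroup.subset[OF K] by auto
      then show "a \<in> id ` carrier (G\<lparr>carrier := A \<inter> N\<rparr>)" using aA by simp
    qed
    show "solvable (G\<lparr>carrier := A\<rparr>)"
      using solvable_condition[OF f1 f2 _ ker solAN sQ] by simp
  next
    assume "solvable (G\<lparr>carrier := A\<rparr>)"
    then show "solvable (Q\<lparr>carrier := \<pi> ` A\<rparr>)"
      using hom_solvable_img[OF hom sA_GK] GKA by simp
  qed
qed

lemma card_Q:
  assumes G: "group G" and fin: "finite (carrier G)" and K: "subgroup K G" and N: "N \<lhd> G\<lparr>carrier := K\<rparr>"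
    and Ns: "solvable (G\<lparr>carrier := N\<rparr>)"
  shows "card (Solv (G\<lparr>carrier := K\<rparr> Mod N)) \<le> card (Solv G)"
proof -
  define GK where "GK = G\<lparr>carrier := K\<rparr>"
  define Q where "Q = GK Mod N"
  define \<pi> where "\<pi> = (\<lambda>a. r_coset GK N a)"
  define F where "F = (\<lambda>S. \<pi> ` (S \<inter> K))"
  have cQ: "carrier Q = \<pi> ` K" unfolding Q_def \<pi>_def GK_def by (auto simp: FactGroup_def RCOSETS_def)
  have KG: "K \<subseteq> carrier G" using subgroup.subset[OF K] .
  have eq: "solvabilizer Q (\<pi> x) = F (solvabilizer G x)" if x: "x \<in> K" for x
  proof -
    have "solvabilizer Q (\<pi> x) = {d \<in> \<pi> ` K. solvable (Q\<lparr>carrier := generate Q {\<pi> x, d}\<rparr>)}"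
      unfolding solvabilizer_def cQ ..
    also have "\<dots> = \<pi> ` {y \<in> K. solvable (Q\<lparr>carrier := generate Q {\<pi> x, \<pi> y}\<rparr>)}" by auto
    also have "\<dots> = \<pi> ` {y \<in> K. solvable (G\<lparr>carrier := generate G {x, y}\<rparr>)}"
    proof (rule arg_cong[where f="image \<pi>"])
      have ke: "solvable (Q\<lparr>carrier := generate Q {\<pi> x, \<pi> y}\<rparr>) \<longleftrightarrow> solvable (G\<lparr>carrier := generate G {x, y}\<rparr>)"
        if "y \<in> K" for y
        using key_equiv[OF G K N Ns x that] unfolding Q_def \<pi>_def GK_def by blast
      show "{y \<in> K. solvable (Q\<lparr>carrier := generate Q {\<pi> x, \<pi> y}\<rparr>)} = {y \<in> K. solvable (G\<lparr>carrier := generate G {x, y}\<rparr>)}"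
        using ke by blast
    qed
    also have "\<dots> = F (solvabilizer G x)" unfolding F_def solvabilizer_def using KG by blast
    finally show ?thesis .
  qed
  have "Solv Q \<subseteq> F ` Solv G"
  proof
    fix S assume "S \<in> Solv Q"
    then obtain x where "x \<in> K" "S = solvabilizer Q (\<pi> x)" unfolding Solv_def cQ by auto
    then show "S \<in> F ` Solv G" using eq KG unfolding Solv_def by auto
  qed
  moreover have "finite (Solv G)" unfolding Solv_def using fin by simp
  ultimately have "card (Solv Q) \<le> card (F ` Solv G)" by (simp add: card_mono)
  also have "\<dots> \<le> card (Solv G)" by (rule card_image_le) fact
  finally show ?thesis unfolding Q_def GK_def .
qed

lemma iso_card_Solv:
  assumes gQ: "group Q" and gH: "group H" and f: "f \<in> iso Q H" and fin: "finite (carrier Q)"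
  shows "card (Solv H) \<le> card (Solv Q)"
proof -
  have hom: "group_hom Q H f" using gQ gH f by (simp add: group_hom_def group_hom_axioms_def iso_def)
  interpret h: group_hom Q H f by (rule hom)
  have bij: "bij_betw f (carrier Q) (carrier H)" using f by (simp add: iso_def)
  have eq: "solvabilizer H (f a) = f ` solvabilizer Q a" if a: "a \<in> carrier Q" for a
  proof -
    have "solvable (H\<lparr>carrier := generate H {f a, f b}\<rparr>) \<longleftrightarrow> solvable (Q\<lparr>carrier := generate Q {a, b}\<rparr>)"
      if b: "b \<in> carrier Q" for b
    proof -
      have ab: "{a,b} \<subseteq> carrier Q" using a b by auto
      have g: "generate H {f a, f b} = f ` generate Q {a,b}" using h.generate_img[OF ab] by simp
      have sg: "subgroup (generate Q {a,b}) Q" using h.G.generate_is_subgroup[OF ab] .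
      have inj: "inj_on f (generate Q {a,b})"
        using bij subgroup.subset[OF sg] inj_on_subset unfolding bij_betw_def by blast
      show ?thesis unfolding g using hom_solvable_img[OF hom sg] hom_solvable_img_inj[OF hom sg inj] by blast
    qed
    moreover have "carrier H = f ` carrier Q" using bij by (simp add: bij_betw_def)
    ultimately show ?thesis unfolding solvabilizer_def by auto
  qed
  have "Solv H = (\<lambda>S. f ` S) ` Solv Q"
  proof -
    have "Solv H = (\<lambda>a. solvabilizer H (f a)) ` carrier Q"
    proof -
      have "carrier H = f ` carrier Q" using bij by (simp add: bij_betw_def)
      then show ?thesis unfolding Solv_def by (simp add: image_image)
    qed
    also have "\<dots> = (\<lambda>a. f ` solvabilizer Q a) ` carrier Q" using eq by simp
    finally show ?thesis unfolding Solv_def by auto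
  qed
  moreover have "finite (Solv Q)" unfolding Solv_def using fin by simp
  ultimately show ?thesis by (simp add: card_image_le)
qed

theorem lemma5p2:
  fixes G :: "('a, 'b) monoid_scheme"
  assumes "group G" and "finite (carrier G)" and "\<not> solvable G"
  shows "\<exists>H :: nat monoid. simple_group H \<and> finite (carrier H) \<and> \<not> comm_group H
           \<and> card (Solv G) \<ge> card (Solv H)"
proof -
  interpret GG: group G by fact
  obtain K where K: "subgroup K G" and Kns: "\<not> solvable (G\<lparr>carrier := K\<rparr>)"
    and Kmin: "\<And>J. subgroup J G \<Longrightarrow> J \<subset> K \<Longrightarrow> solvable (G\<lparr>carrier := J\<rparr>)"
    using exists_K[OF assms] by blast
  define GK where "GK = G\<lparr>carrier := K\<rparr>"
  have gGK: "group GK" unfolding GK_def using subgroup.subgroup_is_group[OF K assms(1)] .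
  have finK: "finite (carrier GK)" unfolding GK_def using subgroup.subset[OF K] assms(2) finite_subset by auto
  have ntriv: "carrier GK \<noteq> {\<one>\<^bsub>GK\<^esub>}"
  proof
    assume "carrier GK = {\<one>\<^bsub>GK\<^esub>}"
    then have "solvable GK" unfolding solvable_def using solvable_seq.unity[of GK] by simp
    then show False using Kns unfolding GK_def by simp
  qed
  obtain N where N: "N \<lhd> GK" and NK: "N \<noteq> carrier GK"
    and Nmax: "\<And>M. M \<lhd> GK \<Longrightarrow> M \<noteq> carrier GK \<Longrightarrow> card M \<le> card N"
    using exists_maxnormal[OF gGK finK ntriv] by blast
  have sN: "subgroup N G" using normal_imp_subgroup[OF N] K GG.incl_subgroup unfolding GK_def by blast
  have "N \<subseteq> K" using normal_imp_subgroup[OF N] subgroup.subset unfolding GK_def by fastforce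
  then have "N \<subset> K" using NK unfolding GK_def by auto
  then have Ns: "solvable (G\<lparr>carrier := N\<rparr>)" using Kmin sN by blast
  define Q where "Q = GK Mod N"
  interpret normal N GK by (rule N)
  have gQ: "group Q" unfolding Q_def by (rule factorgroup_is_group)
  have simpQ: "simple_group Q" unfolding Q_def using simple_quot[OF gGK finK N NK Nmax] .
  have cardQ: "card (Solv Q) \<le> card (Solv G)"
    using card_Q[OF assms(1,2) K _ Ns] N unfolding Q_def GK_def by blast
  have finQ: "finite (carrier Q)" unfolding Q_def using finK by (simp add: FactGroup_def RCOSETS_def)
  have nsQ: "\<not> solvable Q"
  proof
    assume sQ: "solvable Q"
    define \<pi> where "\<pi> = (\<lambda>a. r_coset GK N a)"
    have gN: "group (GK\<lparr>carrier := N\<rparr>)" using subgroup.subgroup_is_group[OF normal_imp_subgroup[OF N] gGK] .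
    have f1: "group_hom (GK\<lparr>carrier := N\<rparr>) GK id"
      using gN gGK normal_imp_subgroup[OF N] subgroup.subset
      unfolding group_hom_def group_hom_axioms_def hom_def by fastforce
    have f2: "group_hom GK Q \<pi>" unfolding Q_def \<pi>_def
      using r_coset_hom_Mod gGK factorgroup_is_group by (simp add: group_hom_def group_hom_axioms_def)
    have surj: "\<pi> ` carrier GK = carrier Q" unfolding Q_def \<pi>_def by (auto simp: FactGroup_def RCOSETS_def)
    have ker: "kernel GK Q \<pi> \<subseteq> id ` carrier (GK\<lparr>carrier := N\<rparr>)"
    proof
      fix a assume a: "a \<in> kernel GK Q \<pi>"
      then have aK: "a \<in> carrier GK" and pa: "\<pi> a = N" unfolding kernel_def Q_def by (auto simp: FactGroup_def)
      have "\<one>\<^bsub>G\<^esub> \<in> N" using subgroup.one_closed[OF sN] .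
      then have "\<one>\<^bsub>G\<^esub> \<otimes>\<^bsub>G\<^esub> a \<in> \<pi> a" unfolding \<pi>_def GK_def r_coset_def by auto
      then have "a \<in> N" using pa aK subgroup.subset[OF K] unfolding GK_def by auto
      then show "a \<in> id ` carrier (GK\<lparr>carrier := N\<rparr>)" by simp
    qed
    have "solvable (GK\<lparr>carrier := N\<rparr>)" using Ns unfolding GK_def by simp
    then have "solvable GK" using solvable_condition[OF f1 f2 surj ker _ sQ] by blast
    then show False using Kns unfolding GK_def by simp
  qed
  obtain f :: "'a set \<Rightarrow> nat" and n where fQ: "f ` carrier Q = {i. i < n}" and inj: "inj_on f (carrier Q)"
    using finite_imp_inj_to_nat_seg[OF finQ] by blast
  define H where "H = flatten Q f"
  have gH: "group H" unfolding H_def using flatten_set_group[OF gQ inj] .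
  have cH: "carrier H = f ` carrier Q" unfolding H_def flatten_def by simp
  have iso: "f \<in> iso Q H"
    using flatten_set_group_hom[OF gQ inj] inj cH unfolding H_def iso_def bij_betw_def by simp
  have "simple_group H" using simple_group.iso_simple[OF simpQ gH iso] .
  moreover have "finite (carrier H)" using cH finQ by simp
  moreover have "\<not> comm_group H"
  proof
    assume "comm_group H"
    then have "solvable H" by (rule comm_solvable)
    moreover have "group_hom Q H f" using gQ gH iso by (simp add: group_hom_def group_hom_axioms_def iso_def)
    ultimately have "solvable Q" using group_hom.inj_hom_imp_solvable inj by blast
    then show False using nsQ by simp
  qed
  moreover have "card (Solv H) \<le> card (Solv G)"
    using iso_card_Solv[OF gQ gH iso finQ] cardQ by linarith
  ultimately show ?thesis by blast
qed

end
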